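(* A ring $R$ is strongly nil-clean if and only if $R$ is a GSWNC ring and $R$ is a UU ring.
   Context: All rings are associative with identity. An element $a$ of a ring is strongly nil-clean if $a = e + q$ with $e$ idempotent, $q$ nilpotent and $eq = qe$; it is strongly weakly nil-clean if there exist an idempotent $e$ and a nilpotent $q$ with $eq = qe$ such that $a = q + e$ or $a = q - e$. A ring is strongly nil-clean if all its elements are strongly nil-clean; it is GSWNC if every non-invertible element is strongly weakly nil-clean. A ring $R$ is UU if every unit is unipotent, i.e., $U(R) \subseteq 1 + {\rm Nil}(R)$. *)

theory Defs
  imports Main
begin

definition idempotent :: "'a::ring_1 \<Rightarrow> bool" where
  "idempotent e \<longleftrightarrow> e * e = e"

definition nilpotent :: "'a::ring_1 \<Rightarrow> bool" where
  "nilpotent q \<longleftrightarrow> (\<exists>n::nat. q ^ n = 0)"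

definition is_unit :: "'a::ring_1 \<Rightarrow> bool" where
  "is_unit u \<longleftrightarrow> (\<exists>v. u * v = 1 \<and> v * u = 1)"

definition strongly_nil_clean_elem :: "'a::ring_1 \<Rightarrow> bool" where
  "strongly_nil_clean_elem a \<longleftrightarrow>
     (\<exists>e q. idempotent e \<and> nilpotent q \<and> e * q = q * e \<and> a = e + q)"

definition strongly_weakly_nil_clean_elem :: "'a::ring_1 \<Rightarrow> bool" where
  "strongly_weakly_nil_clean_elem a \<longleftrightarrow>
     (\<exists>e q. idempotent e \<and> nilpotent q \<and> e * q = q * e \<and> (a = q + e \<or> a = q - e))"

definition strongly_nil_clean_ring :: "'a::ring_1 itself \<Rightarrow> bool" where
  "strongly_nil_clean_ring _ \<longleftrightarrow> (\<forall>a::'a. strongly_nil_clean_elem a)"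

definition GSWNC_ring :: "'a::ring_1 itself \<Rightarrow> bool" where
  "GSWNC_ring _ \<longleftrightarrow> (\<forall>a::'a. \<not> is_unit a \<longrightarrow> strongly_weakly_nil_clean_elem a)"

definition UU_ring :: "'a::ring_1 itself \<Rightarrow> bool" where
  "UU_ring _ \<longleftrightarrow> (\<forall>u::'a. is_unit u \<longrightarrow> nilpotent (u - 1))"

end

theory Submission
  imports Defs
begin

lemma pow_comm: fixes x y :: "'a::ring_1" assumes "x*y = y*x" shows "x^n * y = y * x^n"
proof (induction n)
  case (Suc n)
  have "x^Suc n * y = x * (x^n * y)" by (simp add: mult.assoc)
  also have "\<dots> = x * y * x^n" using Suc by (simp add: mult.assoc)
  also have "\<dots> = y * x^Suc n" using assms by (simp add: mult.assoc)
  finally show ?case .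
qed simp

lemma pow_mult_comm: fixes x y :: "'a::ring_1" assumes "x*y = y*x" shows "(x*y)^n = x^n * y^n"
proof (induction n)
  case (Suc n)
  have "(x*y)^Suc n = x*y*(x^n*y^n)" using Suc by simp
  also have "\<dots> = x*(y*x^n)*y^n" by (simp add: mult.assoc)
  also have "\<dots> = x*(x^n*y)*y^n" using pow_comm[OF assms] by simp
  also have "\<dots> = x^Suc n * y^Suc n" by (simp add: mult.assoc)
  finally show ?case .
qed simp

lemma pow_zero_ge: fixes x :: "'a::ring_1" assumes "x^m = 0" "m \<le> i" shows "x^i = 0"
proof -
  have "x^i = x^m * x^(i-m)" using assms(2) by (simp add: power_add[symmetric])
  then show ?thesis using assms(1) by simp
qed

lemma sum_nil_aux: fixes x y :: "'a::ring_1" assumes c: "x*y = y*x" and m: "x^m = 0" and n: "y^n = 0"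
  shows "\<forall>i j. i + j + k \<ge> m + n \<longrightarrow> x^i * y^j * (x+y)^k = 0"
proof (induction k)
  case 0
  show ?case
  proof (intro allI impI)
    fix i j :: nat assume "i + j + 0 \<ge> m + n"
    then have "m \<le> i \<or> n \<le> j" by linarith
    then show "x^i * y^j * (x+y)^0 = 0" using pow_zero_ge[OF m] pow_zero_ge[OF n] by auto
  qed
next
  case (Suc k)
  show ?case
  proof (intro allI impI)
    fix i j :: nat assume h: "i + j + Suc k \<ge> m + n"
    have yx: "y^j * x = x * y^j" using pow_comm[OF c[symmetric]] by simp
    have "x^i * y^j * (x+y)^Suc k = (x^i * y^j * x + x^i*y^j*y) * (x+y)^k"
      by (simp only: power_Suc distrib_left distrib_right mult.assoc)
    also have "\<dots> = x^Suc i * y^j * (x+y)^k + x^i * y^Suc j * (x+y)^k"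
    proof -
      have "x^i*y^j*x = x^Suc i * y^j" by (metis mult.assoc yx power_Suc2)
      moreover have "x^i*y^j*y = x^i*y^Suc j" by (simp add: mult.assoc power_commutes)
      ultimately show ?thesis by (simp add: distrib_right)
    qed
    also have "\<dots> = 0" using Suc h by (metis add_0 add_Suc add_Suc_shift)
    finally show "x^i * y^j * (x+y)^Suc k = 0" .
  qed
qed

lemma nil_add: fixes x y :: "'a::ring_1" assumes "x*y = y*x" "nilpotent x" "nilpotent y"
  shows "nilpotent (x+y)"
proof -
  obtain m n where "x^m = 0" "y^n = 0" using assms unfolding nilpotent_def by auto
  from sum_nil_aux[OF assms(1) this, of "m+n"] have "(x+y)^(m+n) = 0"
    by (metis add.commute le_add2 mult_1 power_0)
  then show ?thesis unfolding nilpotent_def by blast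
qed

lemma nil_minus: fixes x :: "'a::ring_1" assumes "nilpotent x" shows "nilpotent (-x)"
  using assms unfolding nilpotent_def by (metis mult_zero_right power_minus)

lemma nil_mult: fixes x y :: "'a::ring_1" assumes "x*y = y*x" "nilpotent y"
  shows "nilpotent (x*y)"
  using assms pow_mult_comm[OF assms(1)] unfolding nilpotent_def by (metis mult_zero_right)

lemma one_minus_nil_unit: fixes x :: "'a::ring_1" assumes "nilpotent x" shows "is_unit (1 - x)"
proof -
  obtain n where n: "x^n = 0" using assms unfolding nilpotent_def by auto
  have a: "(1 - x) * (\<Sum>i<k. x^i) = 1 - x^k" for k
  proof (induction k)
    case (Suc k)
    have "(1 - x) * (\<Sum>i<Suc k. x^i) = (1 - x) * (\<Sum>i<k. x^i) + (1 - x) * x^k"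
      by (simp add: distrib_left)
    also have "\<dots> = 1 - x^Suc k" using Suc by (simp add: algebra_simps)
    finally show ?case .
  qed simp
  have b: "(\<Sum>i<k. x^i) * (1 - x) = 1 - x^k" for k
  proof (induction k)
    case (Suc k)
    have "(\<Sum>i<Suc k. x^i) * (1 - x) = (\<Sum>i<k. x^i) * (1 - x) + x^k * (1 - x)"
      by (simp add: distrib_right)
    also have "\<dots> = 1 - x^Suc k" using Suc by (simp add: algebra_simps power_commutes)
    finally show ?case .
  qed simp
  show ?thesis unfolding is_unit_def using a[of n] b[of n] n by auto
qed

lemma unit_mult: fixes a b :: "'a::ring_1" assumes "is_unit a" "is_unit b" shows "is_unit (a*b)"
proof -
  obtain a' b' where "a*a' = 1" "a'*a = 1" "b*b' = 1" "b'*b=1" using assms unfolding is_unit_def by auto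
  then have "a*b*(b'*a') = 1" "(b'*a')*(a*b) = 1"
    by (metis mult.assoc mult_1_left)+
  then show ?thesis unfolding is_unit_def by blast
qed

lemma snc_unit: fixes u :: "'a::ring_1" assumes "strongly_nil_clean_elem u" "is_unit u"
  shows "nilpotent (u - 1)"
proof -
  obtain e q where eq: "idempotent e" "nilpotent q" "e*q = q*e" "u = e + q"
    using assms(1) unfolding strongly_nil_clean_elem_def by auto
  obtain v where v: "u*v = 1" "v*u = 1" using assms(2) unfolding is_unit_def by auto
  have uq: "u*q = q*u" using eq by (simp add: algebra_simps)
  have vq: "v*q = q*v"
  proof -
    have "v*q = v*q*(u*v)" using v by simp
    also have "\<dots> = v*(q*u)*v" by (simp add: mult.assoc)
    also have "\<dots> = v*(u*q)*v" using uq by simp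
    also have "\<dots> = q*v" using v by (simp add: mult.assoc[symmetric])
    finally show ?thesis .
  qed
  have "is_unit (1 - v*q)" using one_minus_nil_unit nil_mult[OF vq eq(2)] by blast
  then have "is_unit (u * (1 - v*q))" using unit_mult assms(2) by blast
  moreover have "u * (1 - v*q) = e" using v eq(4) by (simp add: algebra_simps mult.assoc[symmetric])
  ultimately have "is_unit e" by simp
  then obtain w where w: "w*e = 1" unfolding is_unit_def by auto
  have "e = w*(e*e)" using w by (simp add: mult.assoc[symmetric])
  also have "\<dots> = 1" using eq(1) w unfolding idempotent_def by simp
  finally have "e = 1" .
  then show ?thesis using eq by simp
qed

theorem lemma2p31:
  "strongly_nil_clean_ring TYPE('a::ring_1) \<longleftrightarrow>
     GSWNC_ring TYPE('a) \<and> UU_ring TYPE('a)"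
proof
  assume h: "strongly_nil_clean_ring TYPE('a::ring_1)"
  have "GSWNC_ring TYPE('a)" using h
    unfolding strongly_nil_clean_ring_def GSWNC_ring_def strongly_nil_clean_elem_def
      strongly_weakly_nil_clean_elem_def by (metis add.commute)
  moreover have "UU_ring TYPE('a)" using h snc_unit
    unfolding strongly_nil_clean_ring_def UU_ring_def by blast
  ultimately show "GSWNC_ring TYPE('a) \<and> UU_ring TYPE('a)" by simp
next
  assume h: "GSWNC_ring TYPE('a) \<and> UU_ring TYPE('a)"
  have "is_unit (-1::'a)" unfolding is_unit_def by (rule exI[of _ "-1"]) simp
  then have "nilpotent ((-1::'a) - 1)" using h unfolding UU_ring_def by blast
  then have two: "nilpotent ((1::'a) + 1)" using nil_minus by fastforce
  show "strongly_nil_clean_ring TYPE('a)"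
    unfolding strongly_nil_clean_ring_def
  proof
    fix a :: 'a
    show "strongly_nil_clean_elem a"
    proof (cases "is_unit a")
      case True
      then have "nilpotent (a - 1)" using h unfolding UU_ring_def by blast
      then show ?thesis unfolding strongly_nil_clean_elem_def idempotent_def
        by (intro exI[of _ 1] exI[of _ "a - 1"]) simp
    next
      case False
      then obtain e q where eq: "idempotent e" "nilpotent q" "e*q = q*e" "a = q + e \<or> a = q - e"
        using h unfolding GSWNC_ring_def strongly_weakly_nil_clean_elem_def by blast
      show ?thesis
      proof (cases "a = q + e")
        case True
        then show ?thesis using eq unfolding strongly_nil_clean_elem_def by (metis add.commute)
      next
        case False
        then have a: "a = q - e" using eq by auto
        have c2: "(1+1)*e = e*(1+(1::'a))" by (simp only: distrib_left distrib_right mult_1_left mult_1_right)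
        have n2: "nilpotent ((1+1)*e)" using nil_mult[OF c2[symmetric] two] c2 by simp
        have cm: "q * - ((1+1)*e) = - ((1+1)*e) * q"
          by (simp only: distrib_left distrib_right mult_1_left mult_1_right eq(3) mult_minus_right mult_minus_left)
        have "nilpotent (q + - ((1+1)*e))"
          by (rule nil_add[OF cm eq(2) nil_minus[OF n2]])
        moreover have "e * (q + - ((1+1)*e)) = (q + - ((1+1)*e)) * e"
          by (simp only: distrib_left distrib_right mult_1_left mult_1_right eq(3) mult_minus_right mult_minus_left)
        moreover have "a = e + (q + - ((1+1)*e))" using a by (simp only: distrib_right mult_1_left) (simp add: algebra_simps)
        ultimately show ?thesis using eq(1) unfolding strongly_nil_clean_elem_def by blast
      qed
    qed
  qed
qed

end
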